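(* For real numbers $a<b$, the structure $([a,b],\oplus,a,b)$, where $x\oplus y=\tfrac{x+y}{2}$, is an interval object in the category of sets: it is an m-convex body, and for every m-convex body $(A,m)$ in sets and all $x,y\in A$ there is a unique midpoint homomorphism $h\colon[a,b]\to A$ with $h(a)=x$ and $h(b)=y$.
   Context: A midpoint set is a set $A$ with $m\colon A\times A\to A$ satisfying $m(x,x)=x$, $m(x,y)=m(y,x)$, $m(m(x,y),m(z,w))=m(m(x,z),m(y,w))$. It is cancellative if $m(x,y)=m(x,z)$ implies $y=z$, and iterative if for every set $X$ and functions $h\colon X\to A$, $t\colon X\to X$ there is a unique $u\colon X\to A$ with $u(x)=m(h(x),u(t(x)))$. An m-convex body is a cancellative iterative midpoint set; a midpoint homomorphism is a function preserving the midpoint operation. *)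

theory Defs
  imports Complex_Main "HOL-Library.FuncSet"
begin

definition midpoint_set :: "'a set \<Rightarrow> ('a \<Rightarrow> 'a \<Rightarrow> 'a) \<Rightarrow> bool" where
  "midpoint_set A m \<longleftrightarrow>
     (\<forall>x\<in>A. \<forall>y\<in>A. m x y \<in> A) \<and>
     (\<forall>x\<in>A. m x x = x) \<and>
     (\<forall>x\<in>A. \<forall>y\<in>A. m x y = m y x) \<and>
     (\<forall>x\<in>A. \<forall>y\<in>A. \<forall>z\<in>A. \<forall>w\<in>A. m (m x y) (m z w) = m (m x z) (m y w))"

definition cancellative :: "'a set \<Rightarrow> ('a \<Rightarrow> 'a \<Rightarrow> 'a) \<Rightarrow> bool" where
  "cancellative A m \<longleftrightarrow> (\<forall>x\<in>A. \<forall>y\<in>A. \<forall>z\<in>A. m x y = m x z \<longrightarrow> y = z)"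

text \<open>Iterativity, with the index sets X ranging over all subsets of the type 'x.
Functions X \<rightarrow> A are represented as extensional functions.\<close>
definition iterative :: "'x itself \<Rightarrow> 'a set \<Rightarrow> ('a \<Rightarrow> 'a \<Rightarrow> 'a) \<Rightarrow> bool" where
  "iterative _ A m \<longleftrightarrow>
     (\<forall>(X::'x set) h t. h \<in> X \<rightarrow> A \<longrightarrow> t \<in> X \<rightarrow> X \<longrightarrow>
        (\<exists>!u. u \<in> X \<rightarrow>\<^sub>E A \<and> (\<forall>x\<in>X. u x = m (h x) (u (t x)))))"

definition m_convex_body :: "'x itself \<Rightarrow> 'a set \<Rightarrow> ('a \<Rightarrow> 'a \<Rightarrow> 'a) \<Rightarrow> bool" where
  "m_convex_body T A m \<longleftrightarrow> midpoint_set A m \<and> cancellative A m \<and> iterative T A m"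

definition midpoint_hom ::
  "'a set \<Rightarrow> ('a \<Rightarrow> 'a \<Rightarrow> 'a) \<Rightarrow> 'b set \<Rightarrow> ('b \<Rightarrow> 'b \<Rightarrow> 'b) \<Rightarrow> ('a \<Rightarrow> 'b) \<Rightarrow> bool" where
  "midpoint_hom A m B n f \<longleftrightarrow> f \<in> A \<rightarrow> B \<and> (\<forall>x\<in>A. \<forall>y\<in>A. f (m x y) = n (f x) (f y))"

end

theory Submission
  imports Defs
begin

lemma iterE:
  assumes "iterative TYPE(nat) A m" "\<And>n. hh n \<in> A"
  shows "\<exists>!u. u \<in> (UNIV::nat set) \<rightarrow>\<^sub>E A \<and> (\<forall>n. u n = m (hh n) (u (Suc n)))"
proof -
  have "hh \<in> (UNIV::nat set) \<rightarrow> A" using assms(2) by auto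
  moreover have "Suc \<in> (UNIV::nat set) \<rightarrow> UNIV" by auto
  moreover have "\<forall>(X::nat set) h t. h \<in> X \<rightarrow> A \<longrightarrow> t \<in> X \<rightarrow> X \<longrightarrow>
        (\<exists>!u. u \<in> X \<rightarrow>\<^sub>E A \<and> (\<forall>x\<in>X. u x = m (h x) (u (t x))))"
    using assms(1) unfolding iterative_def .
  ultimately have "\<exists>!u. u \<in> (UNIV::nat set) \<rightarrow>\<^sub>E A \<and> (\<forall>x\<in>UNIV. u x = m (hh x) (u (Suc x)))"
    by (elim allE[of _ UNIV] allE[of _ hh] allE[of _ Suc] impE)
  then show ?thesis by simp
qed

lemma funpow_in:
  assumes "T \<in> S \<rightarrow> S" "s \<in> S" shows "(T ^^ n) s \<in> S"
  using assms by (induction n) auto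

lemma iter_unique:
  assumes it: "iterative TYPE(nat) A m" and H: "H \<in> S \<rightarrow> A" and T: "T \<in> S \<rightarrow> S"
    and g1: "g1 \<in> S \<rightarrow> A" "\<forall>s\<in>S. g1 s = m (H s) (g1 (T s))"
    and g2: "g2 \<in> S \<rightarrow> A" "\<forall>s\<in>S. g2 s = m (H s) (g2 (T s))"
    and s: "s \<in> S"
  shows "g1 s = g2 s"
proof -
  define Q where "Q v \<longleftrightarrow> v \<in> (UNIV::nat set) \<rightarrow>\<^sub>E A \<and> (\<forall>n. v n = m (H ((T ^^ n) s)) (v (Suc n)))" for v
  have hh: "\<And>n. H ((T ^^ n) s) \<in> A" using H funpow_in[OF T s] by auto
  have E: "\<exists>!u. Q u" unfolding Q_def by (rule iterE[OF it]) (rule hh)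
  have gen: "Q (\<lambda>n. g ((T ^^ n) s))" if g: "g \<in> S \<rightarrow> A" "\<forall>s\<in>S. g s = m (H s) (g (T s))" for g
    unfolding Q_def
  proof (intro conjI allI)
    have "\<And>n. g ((T ^^ n) s) \<in> A" using g(1) funpow_in[OF T s] by auto
    then show "(\<lambda>n. g ((T ^^ n) s)) \<in> (UNIV::nat set) \<rightarrow>\<^sub>E A" by auto
    fix n
    have "(T ^^ n) s \<in> S" by (rule funpow_in[OF T s])
    from bspec[OF g(2) this] have "g ((T ^^ n) s) = m (H ((T ^^ n) s)) (g (T ((T ^^ n) s)))" .
    then show "g ((T ^^ n) s) = m (H ((T ^^ n) s)) (g ((T ^^ Suc n) s))"
      by (simp only: funpow.simps o_apply)
  qed
  have "(\<lambda>n. g1 ((T ^^ n) s)) = (\<lambda>n. g2 ((T ^^ n) s))"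
  proof -
    have q1: "Q (\<lambda>n. g1 ((T ^^ n) s))" by (rule gen[OF g1])
    have q2: "Q (\<lambda>n. g2 ((T ^^ n) s))" by (rule gen[OF g2])
    have U: "\<forall>y y'. Q y \<and> Q y' \<longrightarrow> y = y'" using E by blast
    show ?thesis using U q1 q2 by blast
  qed
  from fun_cong[OF this, of 0] show ?thesis by simp
qed

lemma iter_exists:
  assumes it: "iterative TYPE(nat) A m" and H: "H \<in> S \<rightarrow> A" and T: "T \<in> S \<rightarrow> S"
  shows "\<exists>g. g \<in> S \<rightarrow> A \<and> (\<forall>s\<in>S. g s = m (H s) (g (T s)))"
proof -
  define P where "P s u \<longleftrightarrow> u \<in> (UNIV::nat set) \<rightarrow>\<^sub>E A \<and> (\<forall>n. u n = m (H ((T ^^ n) s)) (u (Suc n)))" for s u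
  have ex: "\<exists>!u. P s u" if "s \<in> S" for s
  proof -
    have hh: "\<And>n. H ((T ^^ n) s) \<in> A" using H funpow_in[OF T that] by auto
    show ?thesis unfolding P_def by (rule iterE[OF it]) (rule hh)
  qed
  define U where "U s = (THE u. P s u)" for s
  have PU: "P s (U s)" if "s \<in> S" for s unfolding U_def using theI'[OF ex[OF that]] .
  have PU1: "U s \<in> (UNIV::nat set) \<rightarrow>\<^sub>E A" if "s \<in> S" for s
    using PU[OF that] unfolding P_def by (rule conjunct1)
  have PU2: "U s n = m (H ((T ^^ n) s)) (U s (Suc n))" if "s \<in> S" for s n
  proof -
    have "\<forall>n. U s n = m (H ((T ^^ n) s)) (U s (Suc n))"
      using PU[OF that] unfolding P_def by (rule conjunct2)
    then show ?thesis by (rule spec)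
  qed
  have shift: "U (T s) = (\<lambda>n. U s (Suc n))" if "s \<in> S" for s
  proof -
    have Ts: "T s \<in> S" using T that by auto
    have fp: "(T ^^ n) (T s) = (T ^^ Suc n) s" for n
      by (simp only: funpow_Suc_right o_apply)
    have "P (T s) (\<lambda>n. U s (Suc n))"
      unfolding P_def
    proof (intro conjI allI)
      have "\<And>n. U s n \<in> A" using PU1[OF that] by auto
      then show "(\<lambda>n. U s (Suc n)) \<in> (UNIV::nat set) \<rightarrow>\<^sub>E A" by auto
      fix n show "U s (Suc n) = m (H ((T ^^ n) (T s))) (U s (Suc (Suc n)))"
        unfolding fp by (rule PU2[OF that])
    qed
    then show ?thesis unfolding U_def by (rule the1_equality[OF ex[OF Ts]])
  qed
  show ?thesis
  proof (intro exI[of _ "\<lambda>s. U s 0"] conjI ballI)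
    show "(\<lambda>s. U s 0) \<in> S \<rightarrow> A"
    proof
      fix s assume "s \<in> S"
      from PU1[OF this] show "U s 0 \<in> A" by auto
    qed
    fix s assume s: "s \<in> S"
    from PU2[OF s, of 0] have "U s 0 = m (H ((T ^^ 0) s)) (U s (Suc 0))" .
    then show "U s 0 = m (H s) (U (T s) 0)" unfolding shift[OF s] by (simp only: funpow_0)
  qed
qed

lemma real_iter_exists:
  fixes a b :: real
  assumes ab: "a \<le> b" and h: "h \<in> X \<rightarrow> {a..b}" and t: "t \<in> X \<rightarrow> X"
  shows "\<exists>u. u \<in> X \<rightarrow>\<^sub>E {a..b} \<and> (\<forall>x\<in>X. u x = (h x + u (t x)) / 2)"
proof -
  define f where "f x n = h ((t ^^ n) x) / 2 ^ Suc n" for x n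
  define s where "s x = suminf (f x)" for x
  have cin: "h ((t ^^ n) x) \<in> {a..b}" if "x \<in> X" for x n
    using h funpow_in[OF t that] by auto
  have sm: "summable (f x)" if x: "x \<in> X" for x
  proof (rule summable_comparison_test)
    show "summable (\<lambda>n. (max \<bar>a\<bar> \<bar>b\<bar>) * (1/2) ^ Suc n)"
      using power_half_series summable_mult sums_summable by blast
    show "\<exists>N. \<forall>n\<ge>N. norm (f x n) \<le> max \<bar>a\<bar> \<bar>b\<bar> * (1 / 2) ^ Suc n"
    proof (intro exI allI impI)
      fix n
      have "\<bar>h ((t ^^ n) x)\<bar> \<le> max \<bar>a\<bar> \<bar>b\<bar>" using cin[OF x, of n] by auto
      then show "norm (f x n) \<le> max \<bar>a\<bar> \<bar>b\<bar> * (1 / 2) ^ Suc n"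
        unfolding f_def by (simp add: power_divide divide_right_mono)
    qed
  qed
  have sab: "s x \<in> {a..b}" if x: "x \<in> X" for x
  proof -
    have 1: "(\<lambda>n. a * (1/2) ^ Suc n) sums a" using sums_mult[OF power_half_series, of a] by simp
    have 2: "(\<lambda>n. b * (1/2) ^ Suc n) sums b" using sums_mult[OF power_half_series, of b] by simp
    have 3: "f x sums s x" using sm[OF x] unfolding s_def by (simp add: summable_sums)
    have "a \<le> s x"
      by (rule sums_le[OF _ 1 3]) (use cin[OF x] in \<open>auto simp: f_def power_divide divide_right_mono\<close>)
    moreover have "s x \<le> b"
      by (rule sums_le[OF _ 3 2]) (use cin[OF x] in \<open>auto simp: f_def power_divide divide_right_mono\<close>)
    ultimately show ?thesis by auto
  qed
  have seq: "s x = (h x + s (t x)) / 2" if x: "x \<in> X" for x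
  proof -
    have tx: "t x \<in> X" using t x by auto
    have "(\<lambda>n. f x (Suc n)) = (\<lambda>n. f (t x) n / 2)"
      by (rule ext) (simp add: f_def funpow_swap1)
    then have "(\<Sum>n. f x (Suc n)) = s (t x) / 2"
      unfolding s_def using suminf_divide[OF sm[OF tx]] by simp
    moreover have "(\<Sum>n. f x (Suc n)) = s x - f x 0"
      unfolding s_def by (rule suminf_split_head[OF sm[OF x]])
    moreover have "f x 0 = h x / 2" by (simp add: f_def)
    ultimately show ?thesis by (simp add: field_simps)
  qed
  show ?thesis
  proof (intro exI[of _ "restrict s X"] conjI ballI)
    show "restrict s X \<in> X \<rightarrow>\<^sub>E {a..b}" using sab by auto
    fix x assume x: "x \<in> X"
    then show "restrict s X x = (h x + restrict s X (t x)) / 2"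
      using seq[OF x] t by auto
  qed
qed

lemma real_iter_unique:
  fixes a b :: real
  assumes t: "t \<in> X \<rightarrow> X"
    and u1: "u1 \<in> X \<rightarrow> {a..b}" "\<forall>x\<in>X. u1 x = (h x + u1 (t x)) / 2"
    and u2: "u2 \<in> X \<rightarrow> {a..b}" "\<forall>x\<in>X. u2 x = (h x + u2 (t x)) / 2"
    and x: "x \<in> X"
  shows "u1 x = u2 x"
proof -
  have bnd: "\<forall>x\<in>X. \<bar>u1 x - u2 x\<bar> \<le> (b - a) / 2 ^ n" for n
  proof (induction n)
    case 0 show ?case
    proof
      fix x assume "x \<in> X"
      then have "u1 x \<in> {a..b}" "u2 x \<in> {a..b}" using u1(1) u2(1) by auto
      then show "\<bar>u1 x - u2 x\<bar> \<le> (b - a) / 2 ^ 0" by auto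
    qed
  next
    case (Suc n)
    show ?case
    proof
      fix x assume x: "x \<in> X"
      then have tx: "t x \<in> X" using t by auto
      have e1: "u1 x = (h x + u1 (t x)) / 2" "u2 x = (h x + u2 (t x)) / 2" using u1(2) u2(2) x by blast+
      have "u1 x - u2 x = (u1 (t x) - u2 (t x)) / 2" unfolding e1 by (simp add: field_simps)
      then have "\<bar>u1 x - u2 x\<bar> = \<bar>u1 (t x) - u2 (t x)\<bar> / 2" by (simp only: abs_divide)
      also have "\<dots> \<le> ((b - a) / 2 ^ n) / 2"
      proof -
        have "\<bar>u1 (t x) - u2 (t x)\<bar> \<le> (b - a) / 2 ^ n" using Suc.IH tx by blast
        then show ?thesis by (rule divide_right_mono) simp
      qed
      finally show "\<bar>u1 x - u2 x\<bar> \<le> (b - a) / 2 ^ Suc n" by simp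
    qed
  qed
  show ?thesis
  proof (rule ccontr)
    assume "u1 x \<noteq> u2 x"
    then have d: "\<bar>u1 x - u2 x\<bar> > 0" by simp
    obtain n where n: "(b - a) / \<bar>u1 x - u2 x\<bar> < 2 ^ n"
      using real_arch_pow[of 2 "(b - a) / \<bar>u1 x - u2 x\<bar>"] by auto
    then have "(b - a) / 2 ^ n < \<bar>u1 x - u2 x\<bar>" using d by (simp add: field_simps)
    with bnd[of n] x show False by force
  qed
qed

lemma part1:
  fixes a b :: real
  assumes "a \<le> b"
  shows "m_convex_body TYPE('x) {a..b} (\<lambda>x y. (x + y) / 2)"
  unfolding m_convex_body_def midpoint_set_def cancellative_def iterative_def
proof (intro conjI allI impI)
  fix X :: "'x set" and h t
  assume h: "h \<in> X \<rightarrow> {a..b}" and t: "t \<in> X \<rightarrow> X"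
  show "\<exists>!u. u \<in> X \<rightarrow>\<^sub>E {a..b} \<and> (\<forall>x\<in>X. u x = (h x + u (t x)) / 2)"
  proof (rule ex_ex1I)
    show "\<exists>u. u \<in> X \<rightarrow>\<^sub>E {a..b} \<and> (\<forall>x\<in>X. u x = (h x + u (t x)) / 2)"
      by (rule real_iter_exists[OF assms h t])
  next
    fix u1 u2
    assume 1: "u1 \<in> X \<rightarrow>\<^sub>E {a..b} \<and> (\<forall>x\<in>X. u1 x = (h x + u1 (t x)) / 2)"
      and 2: "u2 \<in> X \<rightarrow>\<^sub>E {a..b} \<and> (\<forall>x\<in>X. u2 x = (h x + u2 (t x)) / 2)"
    show "u1 = u2"
    proof (rule PiE_ext)
      show p1: "u1 \<in> X \<rightarrow>\<^sub>E {a..b}" using 1 by (rule conjunct1)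
      show p2: "u2 \<in> X \<rightarrow>\<^sub>E {a..b}" using 2 by (rule conjunct1)
      fix x assume x: "x \<in> X"
      have a1: "u1 \<in> X \<rightarrow> {a..b}" "u2 \<in> X \<rightarrow> {a..b}" using p1 p2 by (auto simp: PiE_iff)
      show "u1 x = u2 x"
      proof -
        have e1: "\<forall>x\<in>X. u1 x = (h x + u1 (t x)) / 2" using 1 by (rule conjunct2)
        have e2: "\<forall>x\<in>X. u2 x = (h x + u2 (t x)) / 2" using 2 by (rule conjunct2)
        show ?thesis by (rule real_iter_unique[OF t a1(1) e1 a1(2) e2 x])
      qed
    qed
  qed
qed (auto simp: field_simps)


lemma part2:
  fixes a b :: real
  assumes ab: "a < b" and mcb: "m_convex_body TYPE(nat) A m" and x: "x \<in> A" and y: "y \<in> A"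
  shows "\<exists>!h. h \<in> {a..b} \<rightarrow>\<^sub>E A \<and>
          midpoint_hom {a..b} (\<lambda>u v. (u + v) / 2) A m h \<and> h a = x \<and> h b = y"
proof -
  have it: "iterative TYPE(nat) A m" and ms: "midpoint_set A m" and canc: "cancellative A m"
    using mcb unfolding m_convex_body_def by auto
  have M: "(\<forall>x\<in>A. \<forall>y\<in>A. m x y \<in> A) \<and>
     (\<forall>x\<in>A. m x x = x) \<and>
     (\<forall>x\<in>A. \<forall>y\<in>A. m x y = m y x) \<and>
     (\<forall>x\<in>A. \<forall>y\<in>A. \<forall>z\<in>A. \<forall>w\<in>A. m (m x y) (m z w) = m (m x z) (m y w))"
    using ms unfolding midpoint_set_def .
  have mcl: "m p q \<in> A" if "p \<in> A" "q \<in> A" for p q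
    using bspec[OF bspec[OF conjunct1[OF M] that(1)] that(2)] .
  have idem: "m p p = p" if "p \<in> A" for p
    using bspec[OF conjunct1[OF conjunct2[OF M]] that] .
  have comm: "m p q = m q p" if "p \<in> A" "q \<in> A" for p q
    using bspec[OF bspec[OF conjunct1[OF conjunct2[OF conjunct2[OF M]]] that(1)] that(2)] .
  have med: "m (m p q) (m r w) = m (m p r) (m q w)" if "p \<in> A" "q \<in> A" "r \<in> A" "w \<in> A" for p q r w
    using bspec[OF bspec[OF bspec[OF bspec[OF conjunct2[OF conjunct2[OF conjunct2[OF M]]] that(1)] that(2)] that(3)] that(4)] .
  have cn: "\<And>p q r. p \<in> A \<Longrightarrow> q \<in> A \<Longrightarrow> r \<in> A \<Longrightarrow> m p q = m p r \<Longrightarrow> q = r"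
  proof -
    fix p q r assume "p \<in> A" "q \<in> A" "r \<in> A" "m p q = m p r"
    have "\<forall>x\<in>A. \<forall>y\<in>A. \<forall>z\<in>A. m x y = m x z \<longrightarrow> y = z" using canc unfolding cancellative_def .
    from mp[OF bspec[OF bspec[OF bspec[OF this \<open>p \<in> A\<close>] \<open>q \<in> A\<close>] \<open>r \<in> A\<close>] \<open>m p q = m p r\<close>]
    show "q = r" .
  qed
  define c where "c = (a + b) / 2"
  define H where "H r = (if r \<le> c then x else y)" for r :: real
  define T where "T r = (if r \<le> c then 2 * r - a else 2 * r - b)" for r :: real
  have HA: "H \<in> {a..b} \<rightarrow> A" using x y by (auto simp: H_def)
  have TS: "T \<in> {a..b} \<rightarrow> {a..b}" using ab by (auto simp: T_def c_def)
  obtain g where g: "g \<in> {a..b} \<rightarrow> A" and gfeq: "\<forall>r\<in>{a..b}. g r = m (H r) (g (T r))"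
    using iter_exists[OF it HA TS] by (elim exE conjE)
  have geq: "g r = m (H r) (g (T r))" if "r \<in> {a..b}" for r
    using gfeq that by (rule bspec)
  have gA: "\<And>r. r \<in> {a..b} \<Longrightarrow> g r \<in> A" using g by auto
  have a_in: "a \<in> {a..b}" and b_in: "b \<in> {a..b}" using ab by auto
  have ga: "g a = x"
  proof -
    have e: "H a = x" "T a = a" using ab by (auto simp: H_def T_def c_def)
    have "g a = m (H a) (g (T a))" by (rule geq[OF a_in])
    then have e2: "g a = m x (g a)" unfolding e .
    have "m (g a) (g a) = g a" by (rule idem[OF gA[OF a_in]])
    also have "\<dots> = m x (g a)" by (rule e2)
    also have "\<dots> = m (g a) x" by (rule comm[OF x gA[OF a_in]])
    finally have "m (g a) (g a) = m (g a) x" .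
    from cn[OF gA[OF a_in] gA[OF a_in] x this] show ?thesis .
  qed
  have gb: "g b = y"
  proof -
    have e: "H b = y" "T b = b" using ab by (auto simp: H_def T_def c_def)
    have "g b = m (H b) (g (T b))" by (rule geq[OF b_in])
    then have e2: "g b = m y (g b)" unfolding e .
    have "m (g b) (g b) = g b" by (rule idem[OF gA[OF b_in]])
    also have "\<dots> = m y (g b)" by (rule e2)
    also have "\<dots> = m (g b) y" by (rule comm[OF y gA[OF b_in]])
    finally have "m (g b) (g b) = m (g b) y" .
    from cn[OF gA[OF b_in] gA[OF b_in] y this] show ?thesis .
  qed
  have hA: "g ((a + p) / 2) = m x (g p)" if p: "p \<in> {a..b}" for p
  proof -
    have "(a + p) / 2 \<in> {a..b}" "(a + p) / 2 \<le> c" using p ab by (auto simp: c_def)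
    moreover have "T ((a + p) / 2) = p" using p ab by (auto simp: T_def c_def field_simps)
    ultimately show ?thesis using geq[of "(a + p) / 2"] by (simp add: H_def)
  qed
  have gc: "g c = m x y"
  proof -
    have "c \<in> {a..b}" "T c = b" using ab by (auto simp: c_def T_def field_simps)
    then show ?thesis using geq[of c] gb by (simp add: H_def)
  qed
  have c_in: "c \<in> {a..b}" using ab by (auto simp: c_def)
  have hB: "g ((b + p) / 2) = m y (g p)" if p: "p \<in> {a..b}" for p
  proof (cases "p = a")
    case True
    then have "(b + p) / 2 = c" by (simp add: c_def)
    then show ?thesis using gc ga True comm[OF x y] by simp
  next
    case False
    then have "(b + p) / 2 \<in> {a..b}" "\<not> (b + p) / 2 \<le> c" using p ab by (auto simp: c_def)
    moreover have "T ((b + p) / 2) = p" using calculation by (auto simp: T_def field_simps)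
    ultimately show ?thesis using geq[of "(b + p) / 2"] by (simp add: H_def)
  qed
  have hM: "g ((c + w) / 2) = m (m x y) (g w)" if w: "w \<in> {a..b}" for w
  proof (cases "w \<le> c")
    case True
    have Tw: "T w \<in> {a..b}" using TS w by auto
    have e1: "(c + w) / 2 \<in> {a..b}" "(c + w) / 2 \<le> c" "T ((c + w) / 2) = (b + T w) / 2"
      using True w ab by (auto simp: c_def T_def field_simps)
    have "g ((c + w) / 2) = m x (g ((b + T w) / 2))" using geq[OF e1(1)] e1 by (simp add: H_def)
    also have "\<dots> = m x (m y (g (T w)))" using hB[OF Tw] by simp
    also have "\<dots> = m (m x x) (m y (g (T w)))" using idem[OF x] by simp
    also have "\<dots> = m (m x y) (m x (g (T w)))" using med[OF x x y gA[OF Tw]] by simp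
    also have "\<dots> = m (m x y) (g w)" using geq[OF w] True by (simp add: H_def)
    finally show ?thesis .
  next
    case False
    have Tw: "T w \<in> {a..b}" using TS w by auto
    have e1: "(c + w) / 2 \<in> {a..b}" "\<not> (c + w) / 2 \<le> c" "T ((c + w) / 2) = (a + T w) / 2"
      using False w ab by (auto simp: c_def T_def field_simps)
    have "g ((c + w) / 2) = m y (g ((a + T w) / 2))" using geq[OF e1(1)] e1 by (simp add: H_def)
    also have "\<dots> = m y (m x (g (T w)))" using hA[OF Tw] by simp
    also have "\<dots> = m (m y y) (m x (g (T w)))" using idem[OF y] by simp
    also have "\<dots> = m (m y x) (m y (g (T w)))" using med[OF y y x gA[OF Tw]] by simp
    also have "\<dots> = m (m x y) (g w)" using geq[OF w] False comm[OF x y] by (simp add: H_def)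
    finally show ?thesis .
  qed
  \<comment> \<open>homomorphism property via uniqueness on pairs\<close>
  define S where "S = {a..b} \<times> {a..b}"
  define H2 where "H2 = (\<lambda>(r, s). m (H r) (H s))"
  define T2 where "T2 = (\<lambda>(r, s). (T r, T s))"
  have H2A: "H2 \<in> S \<rightarrow> A" using HA mcl by (auto simp: H2_def S_def)
  have T2S: "T2 \<in> S \<rightarrow> S" using TS by (auto simp: T2_def S_def)
  define F where "F = (\<lambda>(r, s). g ((r + s) / 2))"
  define G where "G = (\<lambda>(r, s). m (g r) (g s))"
  have mid_in: "(r + s) / 2 \<in> {a..b}" if "r \<in> {a..b}" "s \<in> {a..b}" for r s :: real
    using that by auto
  have FA: "F \<in> S \<rightarrow> A" using gA mid_in by (auto simp: F_def S_def)
  have GA: "G \<in> S \<rightarrow> A" using gA mcl by (auto simp: G_def S_def)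
  have Geq: "\<forall>z\<in>S. G z = m (H2 z) (G (T2 z))"
  proof
    fix z assume z: "z \<in> S"
    then obtain r s where rs: "z = (r, s)" "r \<in> {a..b}" "s \<in> {a..b}" by (auto simp: S_def)
    have Tr: "T r \<in> {a..b}" "T s \<in> {a..b}" using TS rs by auto
    have "G z = m (g r) (g s)" using rs by (simp add: G_def)
    also have "\<dots> = m (m (H r) (g (T r))) (m (H s) (g (T s)))"
      by (simp only: geq[OF rs(2), symmetric] geq[OF rs(3), symmetric])
    also have "\<dots> = m (m (H r) (H s)) (m (g (T r)) (g (T s)))"
      by (rule med) (use HA rs gA Tr in auto)
    finally show "G z = m (H2 z) (G (T2 z))" using rs by (simp add: G_def H2_def T2_def)
  qed
  have Feq: "\<forall>z\<in>S. F z = m (H2 z) (F (T2 z))"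
  proof
    fix z assume z: "z \<in> S"
    then obtain r s where rs: "z = (r, s)" "r \<in> {a..b}" "s \<in> {a..b}" by (auto simp: S_def)
    have Tr: "T r \<in> {a..b}" "T s \<in> {a..b}" using TS rs by auto
    have w: "(T r + T s) / 2 \<in> {a..b}" using mid_in[OF Tr] .
    have "g ((r + s) / 2) = m (m (H r) (H s)) (g ((T r + T s) / 2))"
    proof (cases "r \<le> c"; cases "s \<le> c")
      assume "r \<le> c" "s \<le> c"
      then have "(r + s) / 2 = (a + (T r + T s) / 2) / 2" "H r = x" "H s = x"
        by (auto simp: T_def H_def field_simps)
      then show ?thesis using hA[OF w] idem[OF x] by metis
    next
      assume "\<not> r \<le> c" "\<not> s \<le> c"
      then have "(r + s) / 2 = (b + (T r + T s) / 2) / 2" "H r = y" "H s = y"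
        by (auto simp: T_def H_def field_simps)
      then show ?thesis using hB[OF w] idem[OF y] by metis
    next
      assume "r \<le> c" "\<not> s \<le> c"
      then have "(r + s) / 2 = (c + (T r + T s) / 2) / 2" "H r = x" "H s = y"
        by (auto simp: T_def H_def c_def field_simps)
      then show ?thesis using hM[OF w] by metis
    next
      assume "\<not> r \<le> c" "s \<le> c"
      then have "(r + s) / 2 = (c + (T r + T s) / 2) / 2" "H r = y" "H s = x"
        by (auto simp: T_def H_def c_def field_simps)
      then show ?thesis using hM[OF w] comm[OF x y] by metis
    qed
    then show "F z = m (H2 z) (F (T2 z))" using rs by (simp add: F_def H2_def T2_def)
  qed
  have hom: "g ((r + s) / 2) = m (g r) (g s)" if "r \<in> {a..b}" "s \<in> {a..b}" for r s
  proof -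
    have "(r, s) \<in> S" using that by (simp add: S_def)
    from iter_unique[OF it H2A T2S FA Feq GA Geq this] show ?thesis by (simp add: F_def G_def)
  qed
  define h where "h = restrict g {a..b}"
  show ?thesis
  proof (rule ex1I[of _ h])
    show "h \<in> {a..b} \<rightarrow>\<^sub>E A \<and> midpoint_hom {a..b} (\<lambda>u v. (u + v) / 2) A m h \<and> h a = x \<and> h b = y"
    proof (intro conjI)
      show "h \<in> {a..b} \<rightarrow>\<^sub>E A" using g unfolding h_def by (auto simp: Pi_iff)
      show "h a = x" "h b = y" using ga gb a_in b_in by (simp_all add: h_def)
      show "midpoint_hom {a..b} (\<lambda>u v. (u + v) / 2) A m h"
        unfolding midpoint_hom_def
      proof (intro conjI ballI)
        show "h \<in> {a..b} \<rightarrow> A" using g by (auto simp: h_def Pi_iff)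
        fix r s assume rs: "r \<in> {a..b}" "s \<in> {a..b}"
        have "h ((r + s) / 2) = g ((r + s) / 2)" using mid_in[OF rs] by (simp add: h_def)
        also have "\<dots> = m (g r) (g s)" by (rule hom[OF rs])
        finally show "h ((r + s) / 2) = m (h r) (h s)" using rs by (simp add: h_def)
      qed
    qed
  next
    fix h' assume h': "h' \<in> {a..b} \<rightarrow>\<^sub>E A \<and> midpoint_hom {a..b} (\<lambda>u v. (u + v) / 2) A m h' \<and> h' a = x \<and> h' b = y"
    have h'A: "h' \<in> {a..b} \<rightarrow> A" using h' by (auto simp: PiE_iff)
    have h'hom: "\<And>r s. r \<in> {a..b} \<Longrightarrow> s \<in> {a..b} \<Longrightarrow> h' ((r + s) / 2) = m (h' r) (h' s)"
      using h' unfolding midpoint_hom_def by blast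
    have h'eq: "\<forall>r\<in>{a..b}. h' r = m (H r) (h' (T r))"
    proof
      fix r assume r: "r \<in> {a..b}"
      have Tr: "T r \<in> {a..b}" using TS r by auto
      show "h' r = m (H r) (h' (T r))"
      proof (cases "r \<le> c")
        case True
        then have "r = (a + T r) / 2" by (simp add: T_def)
        then have "h' r = m (h' a) (h' (T r))" using h'hom[OF a_in Tr] by metis
        then show ?thesis using True h' by (simp add: H_def)
      next
        case False
        then have "r = (b + T r) / 2" by (simp add: T_def)
        then have "h' r = m (h' b) (h' (T r))" using h'hom[OF b_in Tr] by metis
        then show ?thesis using False h' by (simp add: H_def)
      qed
    qed
    show "h' = h"
    proof (rule PiE_ext)
      show "h' \<in> {a..b} \<rightarrow>\<^sub>E A" using h' by blast
      show "h \<in> {a..b} \<rightarrow>\<^sub>E A" using g by (auto simp: h_def)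
      fix r assume r: "r \<in> {a..b}"
      show "h' r = h r" using iter_unique[OF it HA TS h'A h'eq g gfeq r] r by (simp add: h_def)
    qed
  qed
qed

theorem mainTheorem15:
  fixes a b :: real
  assumes "a < b"
  shows "m_convex_body TYPE('x) {a..b} (\<lambda>x y. (x + y) / 2) \<and>
    (\<forall>(A::'a set) m. m_convex_body TYPE(nat) A m \<longrightarrow>
       (\<forall>x\<in>A. \<forall>y\<in>A. \<exists>!h. h \<in> {a..b} \<rightarrow>\<^sub>E A \<and>
          midpoint_hom {a..b} (\<lambda>u v. (u + v) / 2) A m h \<and> h a = x \<and> h b = y))"
proof (intro conjI allI impI ballI)
  show "m_convex_body TYPE('x) {a..b} (\<lambda>x y. (x + y) / 2)" using part1[of a b] assms by simp
  fix A :: "'a set" and m x y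
  assume "m_convex_body TYPE(nat) A m" "x \<in> A" "y \<in> A"
  then show "\<exists>!h. h \<in> {a..b} \<rightarrow>\<^sub>E A \<and>
          midpoint_hom {a..b} (\<lambda>u v. (u + v) / 2) A m h \<and> h a = x \<and> h b = y"
    by (rule part2[OF assms])
qed

end
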